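(* Let $n\geq 5$, let $S$ be the set of all $3$-cycles in $S_n$, and let $CAG_n=\mathrm{Cay}(A_n,S)$. Let $\tau,\kappa\in S$ with $\tau\neq\kappa$. Then $\tau\kappa=\kappa\tau\neq e$ if and only if there is a unique $4$-cycle in $CAG_n$ containing the vertices $e$, $\tau$ and $\kappa$.
   Context: For a finite group $\Gamma$ and a subset $T\subseteq\Gamma$ with $e\notin T$ and $T=T^{-1}$, the Cayley graph $\mathrm{Cay}(\Gamma,T)$ is the undirected graph with vertex set $\Gamma$ and edge set $\{\{\gamma,t\gamma\}\mid \gamma\in\Gamma, t\in T\}$. $e$ denotes the identity permutation. *)

theory Defs
  imports "HOL-Combinatorics.Combinatorics"
begin

definition alt_group_set :: "nat \<Rightarrow> (nat \<Rightarrow> nat) set" where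
  "alt_group_set n = {p. p permutes {1..n} \<and> evenperm p}"

definition three_cycles :: "nat \<Rightarrow> (nat \<Rightarrow> nat) set" where
  "three_cycles n = {cycle_of_list [a, b, c] | a b c.
      distinct [a, b, c] \<and> a \<in> {1..n} \<and> b \<in> {1..n} \<and> c \<in> {1..n}}"

definition cay_edges :: "('a \<Rightarrow> 'a) set \<Rightarrow> ('a \<Rightarrow> 'a) set \<Rightarrow> ('a \<Rightarrow> 'a) set set" where
  "cay_edges G T = {{g, t \<circ> g} | g t. g \<in> G \<and> t \<in> T}"

definition is_4cycle :: "'v set set \<Rightarrow> 'v set set \<Rightarrow> bool" where
  "is_4cycle E C \<longleftrightarrow> (\<exists>a b c d. distinct [a, b, c, d] \<and>
      C = {{a, b}, {b, c}, {c, d}, {d, a}} \<and> C \<subseteq> E)"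

end

theory Submission
  imports Defs
begin

abbreviation c3 :: "nat \<Rightarrow> nat \<Rightarrow> nat \<Rightarrow> nat \<Rightarrow> nat" where
  "c3 a b c \<equiv> cycle_of_list [a,b,c]"

abbreviation EE :: "nat \<Rightarrow> (nat \<Rightarrow> nat) set set" where
  "EE n \<equiv> cay_edges (alt_group_set n) (three_cycles n)"

definition good :: "nat \<Rightarrow> (nat \<Rightarrow> nat) \<Rightarrow> (nat \<Rightarrow> nat) \<Rightarrow> (nat \<Rightarrow> nat) set set \<Rightarrow> bool" where
  "good n \<tau> \<kappa> C \<longleftrightarrow> is_4cycle (EE n) C \<and> {id, \<tau>, \<kappa>} \<subseteq> \<Union>C"

definition multi :: "nat \<Rightarrow> (nat \<Rightarrow> nat) \<Rightarrow> (nat \<Rightarrow> nat) \<Rightarrow> bool" where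
  "multi n \<tau> \<kappa> \<longleftrightarrow> (\<exists>C1 C2. C1 \<noteq> C2 \<and> good n \<tau> \<kappa> C1 \<and> good n \<tau> \<kappa> C2)"

lemma multi_sym: "multi n \<tau> \<kappa> \<Longrightarrow> multi n \<kappa> \<tau>"
proof -
  have "{id, \<tau>, \<kappa>} = {id, \<kappa>, \<tau>}" by blast
  then show "multi n \<tau> \<kappa> \<Longrightarrow> multi n \<kappa> \<tau>" unfolding multi_def good_def by simp
qed

lemma c3_apply: "distinct [a,b,c] \<Longrightarrow> c3 a b c y = (if y=a then b else if y=b then c else if y=c then a else y)"
  by (auto simp: transpose_def)

declare cycle_of_list.simps[simp del]

lemma c3_even: "distinct [a,b,c] \<Longrightarrow> evenperm (c3 a b c)"
  by (simp add: cycle_of_list.simps evenperm_comp permutation_swap_id evenperm_swap)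

lemma c3_A: "distinct [a,b,c] \<Longrightarrow> a \<in> {1..n} \<Longrightarrow> b \<in> {1..n} \<Longrightarrow> c \<in> {1..n} \<Longrightarrow> c3 a b c \<in> alt_group_set n"
  unfolding alt_group_set_def using c3_even[of a b c] cycle_permutes[of "[a,b,c]"]
  by (auto intro: permutes_subset)

lemma c3_S: "distinct [a,b,c] \<Longrightarrow> a \<in> {1..n} \<Longrightarrow> b \<in> {1..n} \<Longrightarrow> c \<in> {1..n} \<Longrightarrow> c3 a b c \<in> three_cycles n"
  unfolding three_cycles_def by blast

lemma S_elim: "t \<in> three_cycles n \<Longrightarrow> (\<And>a b c. t = c3 a b c \<Longrightarrow> distinct [a,b,c] \<Longrightarrow> a \<in> {1..n} \<Longrightarrow> b \<in> {1..n} \<Longrightarrow> c \<in> {1..n} \<Longrightarrow> P) \<Longrightarrow> P"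
  unfolding three_cycles_def by blast

lemma S_A: "t \<in> three_cycles n \<Longrightarrow> t \<in> alt_group_set n"
  by (erule S_elim) (simp add: c3_A)

lemma id_A: "id \<in> alt_group_set n"
  unfolding alt_group_set_def by simp

lemma A_comp: "g \<in> alt_group_set n \<Longrightarrow> h \<in> alt_group_set n \<Longrightarrow> g \<circ> h \<in> alt_group_set n"
  unfolding alt_group_set_def
proof (elim CollectE conjE, intro CollectI conjI)
  fix g h assume "g permutes {1..n}" "evenperm g" "h permutes {1..n}" "evenperm h"
  then show "g \<circ> h permutes {1..n}" "evenperm (g \<circ> h)"
  proof -
    show "g \<circ> h permutes {1..n}" by (rule permutes_compose) fact+
    have "permutation g" "permutation h" using \<open>g permutes {1..n}\<close> \<open>h permutes {1..n}\<close>
      by (auto simp: permutation_permutes)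
    then show "evenperm (g \<circ> h)" using \<open>evenperm g\<close> \<open>evenperm h\<close> by (simp add: evenperm_comp)
  qed
qed

lemma c3_cube: "distinct [a,b,c] \<Longrightarrow> c3 a b c \<circ> c3 a b c \<circ> c3 a b c = id"
  by (rule ext) (simp add: c3_apply)

lemma c3_sq: "distinct [a,b,c] \<Longrightarrow> c3 a b c \<circ> c3 a b c = c3 a c b"
  by (rule ext) (simp add: c3_apply)

lemma S_sq: "t \<in> three_cycles n \<Longrightarrow> t \<circ> t \<in> three_cycles n"
  by (erule S_elim) (simp add: c3_sq c3_S)

lemma S_cube: "t \<in> three_cycles n \<Longrightarrow> t \<circ> t \<circ> t = id"
  by (erule S_elim) (simp add: c3_cube)

lemma edge_intro: "g \<in> alt_group_set n \<Longrightarrow> t \<in> three_cycles n \<Longrightarrow> h = t \<circ> g \<Longrightarrow> {g,h} \<in> EE n \<and> {h,g} \<in> EE n"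
  unfolding cay_edges_def
proof -
  assume a: "g \<in> alt_group_set n" "t \<in> three_cycles n" "h = t \<circ> g"
  have "{h,g} = {g,h}" by (rule insert_commute)
  moreover have "{g,h} \<in> {{g, t \<circ> g} |g t. g \<in> alt_group_set n \<and> t \<in> three_cycles n}"
    using a by blast
  ultimately show "{g, h} \<in> {{g, t \<circ> g} |g t. g \<in> alt_group_set n \<and> t \<in> three_cycles n} \<and>
    {h, g} \<in> {{g, t \<circ> g} |g t. g \<in> alt_group_set n \<and> t \<in> three_cycles n}" by simp
qed

lemma edge_elim: assumes "{g,h} \<in> EE n"
  shows "g \<in> alt_group_set n \<and> h \<in> alt_group_set n \<and> (\<exists>t\<in>three_cycles n. h = t \<circ> g)"
proof -
  obtain g' t where e: "{g,h} = {g', t \<circ> g'}" "g' \<in> alt_group_set n" "t \<in> three_cycles n"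
    using assms unfolding cay_edges_def by blast
  have tA: "t \<circ> g' \<in> alt_group_set n" using e(2) S_A[OF e(3)] A_comp by blast
  from e(1) have "(g = g' \<and> h = t \<circ> g') \<or> (g = t \<circ> g' \<and> h = g')" by (simp add: doubleton_eq_iff)
  then show ?thesis
  proof
    assume h: "g = g' \<and> h = t \<circ> g'" then show ?thesis using e(2,3) tA by auto
  next
    assume h: "g = t \<circ> g' \<and> h = g'"
    have "h = (t \<circ> t) \<circ> g"
    proof -
      have "(t \<circ> t) \<circ> g = (t \<circ> t \<circ> t) \<circ> h" using h by (simp add: o_assoc)
      then show ?thesis using S_cube[OF e(3)] by simp
    qed
    then show ?thesis using e(2) tA h S_sq[OF e(3)] by auto
  qed
qed

lemma union4: "\<Union>{{w,x},{x,y},{y,z},{z,w::'a}} = {w,x,y,z}" by auto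

lemma good_intro:
  assumes "distinct [w,x,y,z]" "{w,x} \<in> EE n" "{x,y} \<in> EE n" "{y,z} \<in> EE n" "{z,w} \<in> EE n"
    "{id,\<tau>,\<kappa>} \<subseteq> {w,x,y,z}"
  shows "good n \<tau> \<kappa> {{w,x},{x,y},{y,z},{z,w}}"
  unfolding good_def union4
proof
  show "is_4cycle (EE n) {{w, x}, {x, y}, {y, z}, {z, w}}" unfolding is_4cycle_def
    apply (rule exI[of _ w], rule exI[of _ x], rule exI[of _ y], rule exI[of _ z])
    using assms by simp
qed (use assms in simp)

lemma distinct_vals4: "distinct (map (\<lambda>f. (f a, f b, f c, f (d::nat)::nat)) xs) \<Longrightarrow> distinct xs"
  by (simp add: distinct_map)

lemma distinct_vals5: "distinct (map (\<lambda>f. (f a, f b, f c, f d, f (e::nat)::nat)) xs) \<Longrightarrow> distinct xs"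
  by (simp add: distinct_map)

lemma multi_intro:
  assumes "good n \<tau> \<kappa> {{w,x},{x,y},{y,z},{z,w}}" "good n \<tau> \<kappa> {{w',x'},{x',y'},{y',z'},{z',w'}}"
    "v \<in> {w,x,y,z}" "v \<notin> {w',x',y',z'}"
  shows "multi n \<tau> \<kappa>"
  unfolding multi_def
proof (intro exI conjI)
  show "{{w,x},{x,y},{y,z},{z,w}} \<noteq> {{w',x'},{x',y'},{y',z'},{z',w'}}"
  proof
    assume "{{w,x},{x,y},{y,z},{z,w}} = {{w',x'},{x',y'},{y',z'},{z',w'}}"
    then have "\<Union>{{w,x},{x,y},{y,z},{z,w}} = \<Union>{{w',x'},{x',y'},{y',z'},{z',w'}}" by simp
    then show False using assms(3,4) unfolding union4 by simp
  qed
qed fact+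

lemma caseB:
  assumes d: "distinct [a,b,c,d]" and r: "a \<in> {1..n}" "b \<in> {1..n}" "c \<in> {1..n}" "d \<in> {1..n}"
  shows "multi n (c3 a b c) (c3 a b d)"
proof -
  define \<tau> where "\<tau> = c3 a b c"
  define \<kappa> where "\<kappa> = c3 a b d"
  have S: "\<tau> \<in> three_cycles n" "\<kappa> \<in> three_cycles n" "c3 a c d \<in> three_cycles n"
    unfolding \<tau>_def \<kappa>_def using d r by (auto intro!: c3_S)
  have S2: "\<tau> \<circ> \<tau> \<in> three_cycles n" "\<kappa> \<circ> \<kappa> \<in> three_cycles n" using S S_sq by auto
  have A: "\<tau> \<in> alt_group_set n" "\<kappa> \<in> alt_group_set n" "\<tau> \<circ> \<tau> \<in> alt_group_set n" "\<kappa> \<circ> \<kappa> \<in> alt_group_set n"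
    using S S2 S_A by auto
  have k: "\<kappa> = c3 a c d \<circ> \<tau>" unfolding \<tau>_def \<kappa>_def using d by (intro ext) (simp add: c3_apply)
  have e1: "{id,\<tau>} \<in> EE n" "{\<tau>,id} \<in> EE n" using edge_intro[OF id_A S(1)] by auto
  have e2: "{id,\<kappa>} \<in> EE n" "{\<kappa>,id} \<in> EE n" using edge_intro[OF id_A S(2)] by auto
  have e3: "{\<tau>,\<kappa>} \<in> EE n" "{\<kappa>,\<tau>} \<in> EE n" using edge_intro[OF A(1) S(3) k] by auto
  have e4: "{\<kappa>,\<kappa>\<circ>\<kappa>} \<in> EE n" using edge_intro[OF A(2) S(2)] by auto
  have e5: "{\<tau>,\<tau>\<circ>\<tau>} \<in> EE n" using edge_intro[OF A(1) S(1)] by auto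
  have e6: "{\<kappa>\<circ>\<kappa>,id} \<in> EE n" "{\<tau>\<circ>\<tau>,id} \<in> EE n"
    using edge_intro[OF id_A S2(2)] edge_intro[OF id_A S2(1)] by auto
  have dist: "distinct [id, \<tau>, \<kappa>, \<kappa>\<circ>\<kappa>, \<tau>\<circ>\<tau>]"
    apply (rule distinct_vals4[of a b c d]) using d by (simp add: \<tau>_def \<kappa>_def c3_apply)
  have dist': "distinct (rev [id, \<tau>, \<kappa>, \<kappa>\<circ>\<kappa>, \<tau>\<circ>\<tau>])" using dist by (simp only: distinct_rev)
  note dist = dist dist'[simplified]
  have g1: "good n \<tau> \<kappa> {{id,\<tau>},{\<tau>,\<kappa>},{\<kappa>,\<kappa>\<circ>\<kappa>},{\<kappa>\<circ>\<kappa>,id}}"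
    by (rule good_intro[OF _ e1(1) e3(1) e4 e6(1)]) (use dist in simp_all)
  have g2: "good n \<tau> \<kappa> {{id,\<kappa>},{\<kappa>,\<tau>},{\<tau>,\<tau>\<circ>\<tau>},{\<tau>\<circ>\<tau>,id}}"
    by (rule good_intro[OF _ e2(1) e3(2) e5 e6(2)]) (use dist in simp_all)
  have "multi n \<tau> \<kappa>" by (rule multi_intro[OF g1 g2, of "\<kappa>\<circ>\<kappa>"]) (use dist in simp_all)
  then show ?thesis unfolding \<tau>_def \<kappa>_def .
qed

lemma caseA:
  assumes d: "distinct [a,b,c,d,e]" and r: "a \<in> {1..n}" "b \<in> {1..n}" "c \<in> {1..n}" "d \<in> {1..n}" "e \<in> {1..n}"
  shows "multi n (c3 a b c) (c3 a d e)"
proof -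
  have dr: "distinct (rev [a,b,c,d,e])" using d by (simp only: distinct_rev)
  note d = d dr[simplified]
  define \<tau> where "\<tau> = c3 a b c"
  define \<kappa> where "\<kappa> = c3 a d e"
  define x1 where "x1 = c3 a d c"
  define x2 where "x2 = c3 a b c \<circ> c3 a d e"
  have S: "\<tau> \<in> three_cycles n" "\<kappa> \<in> three_cycles n" "c3 c b d \<in> three_cycles n" "c3 a e c \<in> three_cycles n"
     "c3 b d e \<in> three_cycles n" "c3 a b c \<in> three_cycles n"
    unfolding \<tau>_def \<kappa>_def using d r by (auto intro!: c3_S)
  have A: "\<tau> \<in> alt_group_set n" "\<kappa> \<in> alt_group_set n" using S S_A by auto
  have q1: "x1 = c3 c b d \<circ> \<tau>" "x1 = c3 a e c \<circ> \<kappa>" unfolding x1_def \<tau>_def \<kappa>_def using d by (intro ext; simp add: c3_apply)+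
  have q2: "x2 = c3 b d e \<circ> \<tau>" "x2 = c3 a b c \<circ> \<kappa>" unfolding x2_def \<tau>_def \<kappa>_def using d by (intro ext; simp add: c3_apply)+
  have e1: "{id,\<tau>} \<in> EE n" using edge_intro[OF id_A S(1)] by auto
  have e2: "{\<kappa>,id} \<in> EE n" using edge_intro[OF id_A S(2)] by auto
  have e3: "{\<tau>,x1} \<in> EE n" "{x1,\<kappa>} \<in> EE n" using edge_intro[OF A(1) S(3) q1(1)] edge_intro[OF A(2) S(4) q1(2)] by auto
  have e4: "{\<tau>,x2} \<in> EE n" "{x2,\<kappa>} \<in> EE n" using edge_intro[OF A(1) S(5) q2(1)] edge_intro[OF A(2) S(6) q2(2)] by auto
  have dist: "distinct [id, \<tau>, \<kappa>, x1, x2]"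
    apply (rule distinct_vals5[of a b c d e]) using d by (simp add: \<tau>_def \<kappa>_def x1_def x2_def c3_apply)
  have dist': "distinct (rev [id, \<tau>, \<kappa>, x1, x2])" using dist by (simp only: distinct_rev)
  note dist = dist dist'[simplified]
  have g1: "good n \<tau> \<kappa> {{id,\<tau>},{\<tau>,x1},{x1,\<kappa>},{\<kappa>,id}}"
    by (rule good_intro[OF _ e1 e3(1) e3(2) e2]) (use dist in simp_all)
  have g2: "good n \<tau> \<kappa> {{id,\<tau>},{\<tau>,x2},{x2,\<kappa>},{\<kappa>,id}}"
    by (rule good_intro[OF _ e1 e4(1) e4(2) e2]) (use dist in simp_all)
  have "multi n \<tau> \<kappa>" by (rule multi_intro[OF g1 g2, of x1]) (use dist in simp_all)
  then show ?thesis unfolding \<tau>_def \<kappa>_def .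
qed

lemma caseD:
  assumes d: "distinct [a,b,c,d]" and r: "a \<in> {1..n}" "b \<in> {1..n}" "c \<in> {1..n}" "d \<in> {1..n}"
  shows "multi n (c3 a b c) (c3 a d b)"
proof -
  have dr: "distinct (rev [a,b,c,d])" using d by (simp only: distinct_rev)
  note d = d dr[simplified]
  define \<tau> where "\<tau> = c3 a b c"
  define \<kappa> where "\<kappa> = c3 a d b"
  define x1 where "x1 = c3 c a d \<circ> c3 a b c"
  define x2 where "x2 = c3 b d a \<circ> c3 a b c"
  have S: "\<tau> \<in> three_cycles n" "\<kappa> \<in> three_cycles n" "c3 c a d \<in> three_cycles n" "c3 b c d \<in> three_cycles n"
     "c3 b d a \<in> three_cycles n" "c3 a c b \<in> three_cycles n"
    unfolding \<tau>_def \<kappa>_def using d r by (auto intro!: c3_S)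
  have A: "\<tau> \<in> alt_group_set n" "\<kappa> \<in> alt_group_set n" using S S_A by auto
  have q1: "x1 = c3 c a d \<circ> \<tau>" "x1 = c3 b c d \<circ> \<kappa>" unfolding x1_def \<tau>_def \<kappa>_def using d by (intro ext; simp add: c3_apply)+
  have q2: "x2 = c3 b d a \<circ> \<tau>" "x2 = c3 a c b \<circ> \<kappa>" unfolding x2_def \<tau>_def \<kappa>_def using d by (intro ext; simp add: c3_apply)+
  have e1: "{id,\<tau>} \<in> EE n" using edge_intro[OF id_A S(1)] by auto
  have e2: "{\<kappa>,id} \<in> EE n" using edge_intro[OF id_A S(2)] by auto
  have e3: "{\<tau>,x1} \<in> EE n" "{x1,\<kappa>} \<in> EE n" using edge_intro[OF A(1) S(3) q1(1)] edge_intro[OF A(2) S(4) q1(2)] by auto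
  have e4: "{\<tau>,x2} \<in> EE n" "{x2,\<kappa>} \<in> EE n" using edge_intro[OF A(1) S(5) q2(1)] edge_intro[OF A(2) S(6) q2(2)] by auto
  have dist: "distinct [id, \<tau>, \<kappa>, x1, x2]"
    apply (rule distinct_vals4[of a b c d]) using d by (simp add: \<tau>_def \<kappa>_def x1_def x2_def c3_apply)
  have dist': "distinct (rev [id, \<tau>, \<kappa>, x1, x2])" using dist by (simp only: distinct_rev)
  note dist = dist dist'[simplified]
  have g1: "good n \<tau> \<kappa> {{id,\<tau>},{\<tau>,x1},{x1,\<kappa>},{\<kappa>,id}}"
    by (rule good_intro[OF _ e1 e3(1) e3(2) e2]) (use dist in simp_all)
  have g2: "good n \<tau> \<kappa> {{id,\<tau>},{\<tau>,x2},{x2,\<kappa>},{\<kappa>,id}}"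
    by (rule good_intro[OF _ e1 e4(1) e4(2) e2]) (use dist in simp_all)
  have "multi n \<tau> \<kappa>" by (rule multi_intro[OF g1 g2, of x1]) (use dist in simp_all)
  then show ?thesis unfolding \<tau>_def \<kappa>_def .
qed

lemma caseC:
  assumes d: "distinct [a,b,c,d]" and r: "a \<in> {1..n}" "b \<in> {1..n}" "c \<in> {1..n}" "d \<in> {1..n}"
  shows "multi n (c3 a b c) (c3 a c b)"
proof -
  have dr: "distinct (rev [a,b,c,d])" using d by (simp only: distinct_rev)
  note d = d dr[simplified]
  define \<tau> where "\<tau> = c3 a b c"
  define \<kappa> where "\<kappa> = c3 a c b"
  define x1 where "x1 = c3 a c d"
  define x2 where "x2 = c3 a d b"
  have S: "\<tau> \<in> three_cycles n" "\<kappa> \<in> three_cycles n" "x1 \<in> three_cycles n" "x2 \<in> three_cycles n"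
     "c3 a d b \<in> three_cycles n" "c3 b d c \<in> three_cycles n"
    unfolding \<tau>_def \<kappa>_def x1_def x2_def using d r by (auto intro!: c3_S)
  have A: "\<tau> \<in> alt_group_set n" "\<kappa> \<in> alt_group_set n" "x1 \<in> alt_group_set n" "x2 \<in> alt_group_set n"
    using S S_A by auto
  have q: "\<kappa> = c3 a d b \<circ> x1" "\<kappa> = c3 b d c \<circ> x2" "\<tau> = \<kappa> \<circ> \<kappa>"
    unfolding x1_def x2_def \<tau>_def \<kappa>_def using d by (intro ext; simp add: c3_apply)+
  have e1: "{\<tau>,id} \<in> EE n" using edge_intro[OF id_A S(1)] by auto
  have e2: "{\<kappa>,\<tau>} \<in> EE n" using edge_intro[OF A(2) S(2) q(3)] by auto
  have e3: "{id,x1} \<in> EE n" "{x1,\<kappa>} \<in> EE n" using edge_intro[OF id_A S(3)] edge_intro[OF A(3) S(5) q(1)] by auto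
  have e4: "{id,x2} \<in> EE n" "{x2,\<kappa>} \<in> EE n" using edge_intro[OF id_A S(4)] edge_intro[OF A(4) S(6) q(2)] by auto
  have dist: "distinct [id, \<tau>, \<kappa>, x1, x2]"
    apply (rule distinct_vals4[of a b c d]) using d by (simp add: \<tau>_def \<kappa>_def x1_def x2_def c3_apply)
  have dist': "distinct (rev [id, \<tau>, \<kappa>, x1, x2])" using dist by (simp only: distinct_rev)
  note dist = dist dist'[simplified]
  have g1: "good n \<tau> \<kappa> {{id,x1},{x1,\<kappa>},{\<kappa>,\<tau>},{\<tau>,id}}"
    by (rule good_intro[OF _ e3(1) e3(2) e2 e1]) (use dist in simp_all)
  have g2: "good n \<tau> \<kappa> {{id,x2},{x2,\<kappa>},{\<kappa>,\<tau>},{\<tau>,id}}"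
    by (rule good_intro[OF _ e4(1) e4(2) e2 e1]) (use dist in simp_all)
  have "multi n \<tau> \<kappa>" by (rule multi_intro[OF g1 g2, of x1]) (use dist in simp_all)
  then show ?thesis unfolding \<tau>_def \<kappa>_def .
qed

lemma four_unique0:
  assumes "distinct [a,b,c,d]" "C = {{a,b},{b,c},{c,d},{d,a}}" "C \<subseteq> E"
   "u \<in> {a,b,c,d}" "w \<in> {a,b,c,d}" "distinct [u,a,w]" "{a,w} \<notin> E"
   "\<And>x. {a,x} \<in> E \<Longrightarrow> {x,w} \<in> E \<Longrightarrow> x \<noteq> u \<Longrightarrow> x \<noteq> a \<Longrightarrow> x \<noteq> w \<Longrightarrow> x = x0"
  shows "C = {{u,a},{a,x0},{x0,w},{w,u}}"
proof -
  have E: "{a,b} \<in> E" "{b,c} \<in> E" "{c,d} \<in> E" "{d,a} \<in> E" using assms(2,3) by auto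
  have E': "{b,a} \<in> E" "{c,b} \<in> E" "{d,c} \<in> E" "{a,d} \<in> E" using E by (simp_all add: insert_commute)
  have "w \<noteq> b" "w \<noteq> d" using assms(7) E E' by auto
  then have wc: "w = c" using assms(5,6) by auto
  have "u = b \<or> u = d" using assms(4,6) wc assms(1) by auto
  then show ?thesis
  proof
    assume ub: "u = b"
    have "d = x0" using assms(8)[of d] E E' wc ub assms(1) by auto
    then show ?thesis using assms(2) ub wc by (auto simp: insert_commute)
  next
    assume ud: "u = d"
    have "b = x0" using assms(8)[of b] E E' wc ud assms(1) by auto
    then show ?thesis using assms(2) ud wc by (auto simp: insert_commute)
  qed
qed

lemma four_unique:
  assumes "distinct [a,b,c,d]" "C = {{a,b},{b,c},{c,d},{d,a}}" "C \<subseteq> E"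
   "u \<in> {a,b,c,d}" "v \<in> {a,b,c,d}" "w \<in> {a,b,c,d}" "distinct [u,v,w]" "{v,w} \<notin> E"
   "\<And>x. {v,x} \<in> E \<Longrightarrow> {x,w} \<in> E \<Longrightarrow> x \<noteq> u \<Longrightarrow> x \<noteq> v \<Longrightarrow> x \<noteq> w \<Longrightarrow> x = x0"
  shows "C = {{u,v},{v,x0},{x0,w},{w,u}}"
proof -
  have r1: "C = {{b,c},{c,d},{d,a},{a,b}}" "C = {{c,d},{d,a},{a,b},{b,c}}" "C = {{d,a},{a,b},{b,c},{c,d}}"
    using assms(2) by auto
  have X: "\<And>x. {v,x} \<in> E \<Longrightarrow> {x,w} \<in> E \<Longrightarrow> x \<noteq> u \<Longrightarrow> x \<noteq> v \<Longrightarrow> x \<noteq> w \<Longrightarrow> x = x0" by (rule assms(9))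
  have "v = a \<or> v = b \<or> v = c \<or> v = d" using assms(5) by auto
  then show ?thesis
  proof (elim disjE)
    assume h: "v = a" show ?thesis unfolding h
      apply (rule four_unique0[of a b c d C E u w x0])
      using assms(1-8) X h by (simp_all, (blast+)?)
  next
    assume h: "v = b" show ?thesis unfolding h
      apply (rule four_unique0[of b c d a C E u w x0])
      using assms(1,3-8) r1 X h by (simp_all, (blast+)?)
  next
    assume h: "v = c" show ?thesis unfolding h
      apply (rule four_unique0[of c d a b C E u w x0])
      using assms(1,3-8) r1 X h by (simp_all, (blast+)?)
  next
    assume h: "v = d" show ?thesis unfolding h
      apply (rule four_unique0[of d a b c C E u w x0])
      using assms(1,3-8) r1 X h by (simp_all, (blast+)?)
  qed
qed
lemma c3_supp: "distinct [p,q,r] \<Longrightarrow> c3 p q r y \<noteq> y \<Longrightarrow> y \<in> {p,q,r}"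
  by (auto simp: c3_apply split: if_splits)

lemma c3_rot: "distinct [a,b,c] \<Longrightarrow> c3 b c a = c3 a b c" "distinct [a,b,c] \<Longrightarrow> c3 c a b = c3 a b c"
  by (intro ext; auto simp: c3_apply)+

lemma nonadj:
  assumes d: "distinct [a,b,c,d,e,f]" and s: "distinct [p,q,r]"
  shows "c3 p q r \<noteq> c3 d e f \<circ> c3 a b c"
proof
  assume eq: "c3 p q r = c3 d e f \<circ> c3 a b c"
  have "set [a,b,c,d,e,f] \<subseteq> set [p,q,r]"
  proof
    fix y assume y: "y \<in> set [a,b,c,d,e,f]"
    have "(c3 d e f \<circ> c3 a b c) y \<noteq> y" using y d by (auto simp: c3_apply)
    then show "y \<in> set [p,q,r]" using c3_supp[OF s, of y] eq by simp
  qed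
  then have "card (set [a,b,c,d,e,f]) \<le> card (set [p,q,r])" by (intro card_mono) auto
  also have "\<dots> \<le> 3" by (rule order_trans[OF card_length]) simp
  finally show False using distinct_card[OF d] by simp
qed

lemma core:
  assumes d: "distinct [a,b,c,d,e,f]" and s: "distinct [p,q,r]" and u: "distinct [p',q',r']"
    and eq: "c3 p' q' r' \<circ> c3 p q r = c3 d e f \<circ> c3 a b c"
  shows "c3 p q r = c3 a b c \<or> c3 p q r = c3 d e f"
proof -
  have dr: "distinct (rev [a,b,c,d,e,f])" using d by (simp only: distinct_rev)
  note d = d dr[simplified]
  define P where "P = c3 d e f \<circ> c3 a b c"
  have Pout: "P y = y" if "y \<notin> set [a,b,c,d,e,f]" for y using that d by (auto simp: P_def c3_apply)
  have "set [a,b,c,d,e,f] \<subseteq> set [p,q,r,p',q',r']"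
  proof
    fix y assume y: "y \<in> set [a,b,c,d,e,f]"
    have mv: "c3 p' q' r' (c3 p q r y) \<noteq> y" using y d eq[THEN fun_cong, of y] by (auto simp: c3_apply)
    show "y \<in> set [p,q,r,p',q',r']"
    proof (cases "c3 p q r y = y")
      case True then show ?thesis using mv c3_supp[OF u, of y] by auto
    next
      case False then show ?thesis using c3_supp[OF s, of y] by auto
    qed
  qed
  then have "card (set [a,b,c,d,e,f]) \<le> card (set [p,q,r,p',q',r'])" by (intro card_mono) auto
  then have "length [p,q,r,p',q',r'] \<le> card (set [p,q,r,p',q',r'])" using distinct_card[OF d(1)] by simp
  then have "card (set [p,q,r,p',q',r']) = length [p,q,r,p',q',r']" using card_length[of "[p,q,r,p',q',r']"] by linarith
  then have D: "distinct [p,q,r,p',q',r']" by (rule card_distinct)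
  have Dr: "distinct (rev [p,q,r,p',q',r'])" using D by (simp only: distinct_rev)
  note D = D Dr[simplified]
  have hq: "P p = q" using eq[THEN fun_cong, of p] D by (simp add: P_def c3_apply)
  have hr: "P q = r" using eq[THEN fun_cong, of q] D by (simp add: P_def c3_apply)
  have "p \<in> set [a,b,c,d,e,f]" using Pout[of p] hq D by auto
  then consider "p = a" | "p = b" | "p = c" | "p = d" | "p = e" | "p = f" by auto
  then show ?thesis
  proof cases
    case 1 then have "q = b" "r = c" using hq hr d by (auto simp: P_def c3_apply) then show ?thesis using 1 by simp
  next
    case 2 then have "q = c" "r = a" using hq hr d by (auto simp: P_def c3_apply) then show ?thesis using 2 d c3_rot by simp
  next
    case 3 then have "q = a" "r = b" using hq hr d by (auto simp: P_def c3_apply) then show ?thesis using 3 d c3_rot by simp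
  next
    case 4 then have "q = e" "r = f" using hq hr d by (auto simp: P_def c3_apply) then show ?thesis using 4 by simp
  next
    case 5 then have "q = f" "r = d" using hq hr d by (auto simp: P_def c3_apply) then show ?thesis using 5 d c3_rot by simp
  next
    case 6 then have "q = d" "r = e" using hq hr d by (auto simp: P_def c3_apply) then show ?thesis using 6 d c3_rot by simp
  qed
qed



definition bad :: "nat \<Rightarrow> (nat \<Rightarrow> nat) \<Rightarrow> (nat \<Rightarrow> nat) \<Rightarrow> bool" where
  "bad n \<tau> \<kappa> \<longleftrightarrow> \<not> (\<tau> \<circ> \<kappa> = \<kappa> \<circ> \<tau> \<and> \<tau> \<circ> \<kappa> \<noteq> id) \<and> multi n \<tau> \<kappa>"

lemma bad_sym: "bad n \<tau> \<kappa> \<Longrightarrow> bad n \<kappa> \<tau>"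
  unfolding bad_def using multi_sym by metis

lemma bad_A:
  assumes d: "distinct [a,b,c,d,e]" and r: "a \<in> {1..n}" "b \<in> {1..n}" "c \<in> {1..n}" "d \<in> {1..n}" "e \<in> {1..n}"
  shows "bad n (c3 a b c) (c3 a d e)"
proof -
  have "c3 a b c \<circ> c3 a d e \<noteq> c3 a d e \<circ> c3 a b c"
  proof
    assume "c3 a b c \<circ> c3 a d e = c3 a d e \<circ> c3 a b c"
    from fun_cong[OF this, of a] show False using d by (auto simp add: c3_apply split: if_splits)
  qed
  then show ?thesis unfolding bad_def using caseA[OF d r] by blast
qed

lemma bad_B:
  assumes d: "distinct [a,b,c,d]" and r: "a \<in> {1..n}" "b \<in> {1..n}" "c \<in> {1..n}" "d \<in> {1..n}"
  shows "bad n (c3 a b c) (c3 a b d)"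
proof -
  have "c3 a b c \<circ> c3 a b d \<noteq> c3 a b d \<circ> c3 a b c"
  proof
    assume "c3 a b c \<circ> c3 a b d = c3 a b d \<circ> c3 a b c"
    from fun_cong[OF this, of a] show False using d by (auto simp add: c3_apply split: if_splits)
  qed
  then show ?thesis unfolding bad_def using caseB[OF d r] by blast
qed

lemma bad_D:
  assumes d: "distinct [a,b,c,d]" and r: "a \<in> {1..n}" "b \<in> {1..n}" "c \<in> {1..n}" "d \<in> {1..n}"
  shows "bad n (c3 a b c) (c3 a d b)"
proof -
  have "c3 a b c \<circ> c3 a d b \<noteq> c3 a d b \<circ> c3 a b c"
  proof
    assume "c3 a b c \<circ> c3 a d b = c3 a d b \<circ> c3 a b c"
    from fun_cong[OF this, of a] show False using d by (auto simp add: c3_apply split: if_splits)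
  qed
  then show ?thesis unfolding bad_def using caseD[OF d r] by blast
qed

lemma bad_C:
  assumes d: "distinct [a,b,c,d]" and r: "a \<in> {1..n}" "b \<in> {1..n}" "c \<in> {1..n}" "d \<in> {1..n}"
  shows "bad n (c3 a b c) (c3 a c b)"
proof -
  have "c3 a b c \<circ> c3 a c b = id" using d by (intro ext) (simp add: c3_apply)
  then show ?thesis unfolding bad_def using caseC[OF d r] by blast
qed

lemma overlap:
  assumes d1: "distinct [a,b,c]" and d2: "distinct [a,e,f]" and n: "n \<ge> 5"
    and r: "a \<in> {1..n}" "b \<in> {1..n}" "c \<in> {1..n}" "e \<in> {1..n}" "f \<in> {1..n}"
    and ne: "c3 a b c \<noteq> c3 a e f"
  shows "bad n (c3 a b c) (c3 a e f)"
proof -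
  have rot: "c3 c a b = c3 a b c" using c3_rot d1 by simp
  consider "e = b" | "e = c" | "e \<noteq> b \<and> e \<noteq> c" by blast
  then show ?thesis
  proof cases
    case 1
    then have "f \<noteq> c" using ne by auto
    then show ?thesis using 1 bad_B[of a b c f n] d1 d2 r by simp
  next
    case 2
    show ?thesis
    proof (cases "f = b")
      case True
      have "\<not> {1..n} \<subseteq> {a,b,c}"
      proof
        assume "{1..n} \<subseteq> {a,b,c}"
        then have "card {1..n} \<le> card {a,b,c}" by (intro card_mono) auto
        also have "\<dots> \<le> 3" by (simp add: card_insert_if)
        finally show False using n by simp
      qed
      then obtain x where "x \<in> {1..n}" "x \<notin> {a,b,c}" by blast
      then show ?thesis using bad_C[of a b c x n] 2 True d1 r by simp
    next
      case False
      have "bad n (c3 c a b) (c3 c f a)" using bad_D[of c a b f n] 2 False d1 d2 r by simp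
      moreover have "c3 c f a = c3 a c f" using c3_rot(1)[of a c f] d2 2 by simp
      ultimately show ?thesis using rot 2 by simp
    qed
  next
    case 3
    consider "f = b" | "f = c" | "f \<noteq> b \<and> f \<noteq> c" by blast
    then show ?thesis
    proof cases
      case 1 then show ?thesis using bad_D[of a b c e n] 3 d1 d2 r by simp
    next
      case 2
      have "bad n (c3 c a b) (c3 c a e)" using bad_B[of c a b e n] 2 3 d1 d2 r by simp
      moreover have "c3 c a e = c3 a e c" using c3_rot(2)[of a e c] d2 2 by simp
      ultimately show ?thesis using rot 2 by simp
    next
      case 4: 3
      then show ?thesis using bad_A[of a b c e f n] 3 d1 d2 r by simp
    qed
  qed
qed

lemma rot_to:
  assumes "distinct [a,b,c]" "p \<in> {a,b,c}"
  obtains b' c' where "c3 a b c = c3 p b' c'" "distinct [p,b',c']" "{p,b',c'} = {a,b,c}"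
proof -
  consider "p = a" | "p = b" | "p = c" using assms(2) by blast
  then show ?thesis
  proof cases
    case 1 then show ?thesis using that[of b c] assms by auto
  next
    case 2 then show ?thesis using that[of c a] assms c3_rot(1)[OF assms(1)] by auto
  next
    case 3 then show ?thesis using that[of a b] assms c3_rot(2)[OF assms(1)] by auto
  qed
qed

lemma disjoint_case:
  assumes d: "distinct [a,b,c,d,e,f]" and n: "n \<ge> 5"
    and r: "a \<in> {1..n}" "b \<in> {1..n}" "c \<in> {1..n}" "d \<in> {1..n}" "e \<in> {1..n}" "f \<in> {1..n}"
  shows "(c3 a b c \<circ> c3 d e f = c3 d e f \<circ> c3 a b c \<and> c3 a b c \<circ> c3 d e f \<noteq> id) \<and>
    (\<exists>!C. good n (c3 a b c) (c3 d e f) C)"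
proof -
  have dr: "distinct (rev [a,b,c,d,e,f])" using d by (simp only: distinct_rev)
  note d = d dr[simplified]
  define \<tau> where "\<tau> = c3 a b c"
  define \<kappa> where "\<kappa> = c3 d e f"
  define x0 where "x0 = \<tau> \<circ> \<kappa>"
  have d1: "distinct [a,b,c]" "distinct [d,e,f]" "distinct [a,c,b]" using d by auto
  have S: "\<tau> \<in> three_cycles n" "\<kappa> \<in> three_cycles n"
    unfolding \<tau>_def \<kappa>_def using d r by (auto intro!: c3_S)
  have A: "\<tau> \<in> alt_group_set n" "\<kappa> \<in> alt_group_set n" using S S_A by auto
  have comm: "\<tau> \<circ> \<kappa> = \<kappa> \<circ> \<tau>" unfolding \<tau>_def \<kappa>_def using d by (intro ext) (simp add: c3_apply)
  have tt: "\<tau> \<circ> \<tau> = c3 a c b" unfolding \<tau>_def using d1 by (simp add: c3_sq)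
  have t3: "\<tau> \<circ> (\<tau> \<circ> \<tau>) = id" using c3_cube[OF d1(1)] unfolding \<tau>_def by (simp add: o_assoc)
  have acb: "c3 a c b \<circ> \<tau> = id" unfolding \<tau>_def using d by (intro ext) (simp add: c3_apply)
  have dist: "distinct [id, \<tau>, x0, \<kappa>]"
    apply (rule distinct_vals4[of a b d e]) using d by (simp add: \<tau>_def \<kappa>_def x0_def c3_apply)
  have dist': "distinct (rev [id, \<tau>, x0, \<kappa>])" using dist by (simp only: distinct_rev)
  note dist = dist dist'[simplified]
  have lhs: "\<tau> \<circ> \<kappa> = \<kappa> \<circ> \<tau> \<and> \<tau> \<circ> \<kappa> \<noteq> id" using comm dist x0_def by auto
  have e1: "{id,\<tau>} \<in> EE n" using edge_intro[OF id_A S(1)] by auto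
  have e2: "{\<kappa>,id} \<in> EE n" using edge_intro[OF id_A S(2)] by auto
  have e3: "{\<tau>,x0} \<in> EE n" using edge_intro[OF A(1) S(2)] comm x0_def by auto
  have e4: "{x0,\<kappa>} \<in> EE n" using edge_intro[OF A(2) S(1)] x0_def by auto
  have g0: "good n \<tau> \<kappa> {{id,\<tau>},{\<tau>,x0},{x0,\<kappa>},{\<kappa>,id}}"
    by (rule good_intro[OF _ e1 e3 e4 e2]) (use dist in simp_all)
  have nadj: "{\<tau>,\<kappa>} \<notin> EE n"
  proof
    assume "{\<tau>,\<kappa>} \<in> EE n"
    then obtain t where t: "t \<in> three_cycles n" "\<kappa> = t \<circ> \<tau>" using edge_elim by blast
    have "\<kappa> \<circ> (\<tau> \<circ> \<tau>) = t" using t(2) t3 by (simp add: o_assoc[symmetric])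
    then have "t = c3 d e f \<circ> c3 a c b" using tt \<kappa>_def by simp
    moreover obtain p q r where "t = c3 p q r" "distinct [p,q,r]" using t(1) by (rule S_elim)
    ultimately show False using nonadj[of a c b d e f p q r] d by auto
  qed
  have X: "x = x0" if h: "{\<tau>,x} \<in> EE n" "{x,\<kappa>} \<in> EE n" "x \<noteq> id" for x
  proof -
    obtain s where s: "s \<in> three_cycles n" "x = s \<circ> \<tau>" using edge_elim[OF h(1)] by blast
    obtain t where t: "t \<in> three_cycles n" "\<kappa> = t \<circ> x" using edge_elim[OF h(2)] by blast
    have "t \<circ> s = \<kappa> \<circ> (\<tau> \<circ> \<tau>)"
    proof -
      have "t \<circ> s = t \<circ> s \<circ> (\<tau> \<circ> (\<tau> \<circ> \<tau>))" using t3 by simp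
      also have "\<dots> = (t \<circ> (s \<circ> \<tau>)) \<circ> (\<tau> \<circ> \<tau>)" by (simp add: o_assoc)
      finally show ?thesis using s(2) t(2) by simp
    qed
    then have eq: "t \<circ> s = c3 d e f \<circ> c3 a c b" using tt \<kappa>_def by simp
    obtain p q r where pqr: "s = c3 p q r" "distinct [p,q,r]" using s(1) by (rule S_elim)
    obtain p' q' r' where pqr': "t = c3 p' q' r'" "distinct [p',q',r']" using t(1) by (rule S_elim)
    have eq': "c3 p' q' r' \<circ> c3 p q r = c3 d e f \<circ> c3 a c b" using eq pqr pqr' by simp
    have dacb: "distinct [a,c,b,d,e,f]" using d(1) by auto
    have "c3 p q r = c3 a c b \<or> c3 p q r = c3 d e f" by (rule core[OF dacb pqr(2) pqr'(2) eq'])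
    then have "s = c3 a c b \<or> s = \<kappa>" using pqr(1) \<kappa>_def by simp
    then show ?thesis
    proof
      assume "s = c3 a c b" then have "x = id" using s(2) acb by simp
      then show ?thesis using h(3) by simp
    qed (use s(2) comm x0_def in simp)
  qed
  have uniq: "C = {{id,\<tau>},{\<tau>,x0},{x0,\<kappa>},{\<kappa>,id}}" if g: "good n \<tau> \<kappa> C" for C
  proof -
    obtain w x y z where wxyz: "distinct [w,x,y,z]" "C = {{w,x},{x,y},{y,z},{z,w}}" "C \<subseteq> EE n"
    proof -
      have "is_4cycle (EE n) C" using g unfolding good_def by simp
      then show thesis unfolding is_4cycle_def by (elim exE conjE) (rule that)
    qed
    have "{id,\<tau>,\<kappa>} \<subseteq> \<Union>C" using g unfolding good_def by simp
    then have V: "{id,\<tau>,\<kappa>} \<subseteq> {w,x,y,z}" unfolding wxyz(2) union4 .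
    have dd: "distinct [id,\<tau>,\<kappa>]" using dist by simp
    have "C = {{id,\<tau>},{\<tau>,x0},{x0,\<kappa>},{\<kappa>,id}}"
    proof (rule four_unique[OF wxyz, of id \<tau> \<kappa> x0])
      show "id \<in> {w,x,y,z}" "\<tau> \<in> {w,x,y,z}" "\<kappa> \<in> {w,x,y,z}" using V by auto
      show "distinct [id,\<tau>,\<kappa>]" by (rule dd)
      show "{\<tau>,\<kappa>} \<notin> EE n" by (rule nadj)
      show "x' = x0" if "{\<tau>,x'} \<in> EE n" "{x',\<kappa>} \<in> EE n" "x' \<noteq> id" "x' \<noteq> \<tau>" "x' \<noteq> \<kappa>" for x'
        using X that by blast
    qed
    then show ?thesis .
  qed
  have ex: "\<exists>!C. good n \<tau> \<kappa> C" by (rule ex1I[where P="good n \<tau> \<kappa>", OF g0 uniq])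
  from lhs ex show ?thesis unfolding \<tau>_def \<kappa>_def by (rule conjI)
qed

theorem lemma3p1:
  fixes n :: nat and \<tau> \<kappa> :: "nat \<Rightarrow> nat"
  assumes "n \<ge> 5"
    and "\<tau> \<in> three_cycles n" and "\<kappa> \<in> three_cycles n" and "\<tau> \<noteq> \<kappa>"
  shows "(\<tau> \<circ> \<kappa> = \<kappa> \<circ> \<tau> \<and> \<tau> \<circ> \<kappa> \<noteq> id) \<longleftrightarrow>
    (\<exists>!C. is_4cycle (cay_edges (alt_group_set n) (three_cycles n)) C \<and> {id, \<tau>, \<kappa>} \<subseteq> \<Union>C)"
proof -
  have G: "(\<exists>!C. is_4cycle (cay_edges (alt_group_set n) (three_cycles n)) C \<and> {id, \<tau>, \<kappa>} \<subseteq> \<Union>C)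
     \<longleftrightarrow> (\<exists>!C. good n \<tau> \<kappa> C)" unfolding good_def ..
  obtain a b c where t: "\<tau> = c3 a b c" "distinct [a,b,c]" "a \<in> {1..n}" "b \<in> {1..n}" "c \<in> {1..n}"
    using assms(2) by (rule S_elim)
  obtain d e f where k: "\<kappa> = c3 d e f" "distinct [d,e,f]" "d \<in> {1..n}" "e \<in> {1..n}" "f \<in> {1..n}"
    using assms(3) by (rule S_elim)
  show ?thesis
  proof (cases "{a,b,c} \<inter> {d,e,f} = {}")
    case True
    then have "distinct [a,b,c,d,e,f]" using t(2) k(2) by auto
    from disjoint_case[OF this assms(1) t(3-5) k(3-5)]
    have H: "\<tau> \<circ> \<kappa> = \<kappa> \<circ> \<tau> \<and> \<tau> \<circ> \<kappa> \<noteq> id" "\<exists>!C. good n \<tau> \<kappa> C"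
      unfolding t(1) k(1) by blast+
    show ?thesis unfolding G using H by blast
  next
    case False
    then obtain p where p: "p \<in> {a,b,c}" "p \<in> {d,e,f}" by blast
    obtain b' c' where t': "\<tau> = c3 p b' c'" "distinct [p,b',c']" "{p,b',c'} = {a,b,c}"
      using rot_to[OF t(2) p(1)] t(1) by metis
    obtain e' f' where k': "\<kappa> = c3 p e' f'" "distinct [p,e',f']" "{p,e',f'} = {d,e,f}"
      using rot_to[OF k(2) p(2)] k(1) by metis
    have m: "b' \<in> {a,b,c}" "c' \<in> {a,b,c}" "e' \<in> {d,e,f}" "f' \<in> {d,e,f}"
      using t'(3) k'(3) by blast+
    have r: "p \<in> {1..n}" "b' \<in> {1..n}" "c' \<in> {1..n}" "e' \<in> {1..n}" "f' \<in> {1..n}"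
      using m p t(3-5) k(3-5) by auto
    have "bad n \<tau> \<kappa>" using overlap[OF t'(2) k'(2) assms(1) r] t'(1) k'(1) assms(4) by simp
    then have "\<not> (\<tau> \<circ> \<kappa> = \<kappa> \<circ> \<tau> \<and> \<tau> \<circ> \<kappa> \<noteq> id)" "multi n \<tau> \<kappa>" unfolding bad_def by auto
    moreover have "\<not> (\<exists>!C. good n \<tau> \<kappa> C)" if "multi n \<tau> \<kappa>"
      using that unfolding multi_def by blast
    ultimately show ?thesis unfolding G by blast
  qed
qed

end
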